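(* Let $G$ be an $(n,n,p_s,p_d)$-two-island network with groups $V_1,V_2$ and degree of homophily $h_G=p_s/p_d$, and let the dual opinions evolve according to the dynamics in the context with common resilience $\phi\in(0,1)$, common bias $b$ with $\frac{2}{\phi(h_G-1)+2}\le b<1$, and the symmetric initial condition $x_i(0)=x_0\in(\tfrac12,1)$, $y_i(0)=y_0\in[\tfrac12,x_0]$ for $i\in V_1$, $x_j(0)=1-x_0$, $y_j(0)=1-y_0$ for $j\in V_2$. Let $i\in V_1$. If there exists $T>0$ such that $x_i(t)<\hat x(\phi,h_G,b)$ for all $t\ge T$, then there exists $\mathcal T>T$ such that $x_i(t)$ and $y_i(t)$ are monotonic for $t\ge\mathcal T$, and $$\lim_{t\to\infty}x_i(t)=\hat x(\phi,h_G,b),\qquad \lim_{t\to\infty}y_i(t)=\frac{\phi(h_G+1)\hat x(\phi,h_G,b)+1-\phi}{\phi h_G+2-\phi}.$$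
   Context: Let $n\ge 1$ and $p_s,p_d\in(0,1)$ with $p_s>p_d$ and $np_s,np_d$ positive integers. An $(n,n,p_s,p_d)$-two-island network is an undirected graph (no self-loops) with vertex set $V=V_1\cup V_2$, $V_1\cap V_2=\emptyset$, $|V_1|=|V_2|=n$, such that each node of $V_1$ has exactly $np_s$ neighbours in $V_1$ and $np_d$ neighbours in $V_2$, and each node of $V_2$ has exactly $np_s$ neighbours in $V_2$ and $np_d$ neighbours in $V_1$. Its degree of homophily is $h_G=p_s/p_d>1$. Let $w_{ij}\in\{0,1\}$ be the adjacency matrix, $N_i$ the set of neighbours of $i$, and $d_i=\sum_{j\in N_i}w_{ij}$. Dual opinions dynamics: each $i\in V$ has $x_i(t),y_i(t)\in[0,1]$, $t=0,1,2,\dots$, updated by $$x_i(t+1)=\frac{x_i(t)^{b}s_i(t)}{x_i(t)^{b}s_i(t)+(1-x_i(t))^{b}(d_i-s_i(t))},\qquad y_i(t+1)=\phi\, x_i(t+1)+(1-\phi)\hat y_{i,avg}(t),$$ with $s_i(t)=\sum_{j\in N_i}w_{ij}y_j(t)$ and $\hat y_{i,avg}(t)=\sum_{j\in N_i}\frac{w_{ij}}{d_i}y_j(t)$. For $0<b<1$ define $g(x,b)=\frac{x^{1-b}-(1-x)^{1-b}}{x(1-x)^{1-b}-(1-x)x^{1-b}}$ for $x\in(\tfrac12,1)$ and $g(\tfrac12,b)=\frac2b-2$. $\hat x(\phi,h_G,b)$ denotes the solution $x\in[\tfrac12,1)$ of $g(x,b)=\phi(h_G-1)$ (it lies in $(\tfrac12,1)$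 when $b>\frac{2}{\phi(h_G-1)+2}$ and equals $\tfrac12$ when $b=\frac{2}{\phi(h_G-1)+2}$). *)

theory Defs
  imports "HOL-Analysis.Analysis"
begin

definition two_island ::
  "('a \<Rightarrow> 'a \<Rightarrow> bool) \<Rightarrow> 'a set \<Rightarrow> 'a set \<Rightarrow> nat \<Rightarrow> real \<Rightarrow> real \<Rightarrow> bool" where
  "two_island E V1 V2 n ps pd \<longleftrightarrow>
     n \<ge> 1 \<and> 0 < pd \<and> pd < ps \<and> ps < 1 \<and>
     (\<exists>k::nat. k > 0 \<and> real n * ps = real k) \<and>
     (\<exists>k::nat. k > 0 \<and> real n * pd = real k) \<and>
     finite V1 \<and> finite V2 \<and> V1 \<inter> V2 = {} \<and> card V1 = n \<and> card V2 = n \<and>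
     (\<forall>i j. E i j \<longrightarrow> i \<in> V1 \<union> V2 \<and> j \<in> V1 \<union> V2) \<and>
     (\<forall>i j. E i j \<longleftrightarrow> E j i) \<and>
     (\<forall>i. \<not> E i i) \<and>
     (\<forall>i\<in>V1. real (card {j\<in>V1. E i j}) = real n * ps \<and>
               real (card {j\<in>V2. E i j}) = real n * pd) \<and>
     (\<forall>i\<in>V2. real (card {j\<in>V2. E i j}) = real n * ps \<and>
               real (card {j\<in>V1. E i j}) = real n * pd)"

definition nbrs :: "('a \<Rightarrow> 'a \<Rightarrow> bool) \<Rightarrow> 'a set \<Rightarrow> 'a \<Rightarrow> 'a set" where
  "nbrs E V i = {j\<in>V. E i j}"

text \<open>Dual opinions dynamics with common resilience phi and common bias b
  (w_ij = 1 iff E i j, so s_i is the sum of y_j over neighbours, d_i the degree).\<close>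
definition dual_dynamics ::
  "('a \<Rightarrow> 'a \<Rightarrow> bool) \<Rightarrow> 'a set \<Rightarrow> real \<Rightarrow> real \<Rightarrow>
   (nat \<Rightarrow> 'a \<Rightarrow> real) \<Rightarrow> (nat \<Rightarrow> 'a \<Rightarrow> real) \<Rightarrow> bool" where
  "dual_dynamics E V phi b x y \<longleftrightarrow>
     (\<forall>t. \<forall>i\<in>V.
        let N = nbrs E V i;
            d = real (card N);
            s = (\<Sum>j\<in>N. y t j);
            yavg = (\<Sum>j\<in>N. y t j / d)
        in x (Suc t) i = (x t i powr b * s) /
                           (x t i powr b * s + (1 - x t i) powr b * (d - s))
         \<and> y (Suc t) i = phi * x (Suc t) i + (1 - phi) * yavg)"

definition g_fun :: "real \<Rightarrow> real \<Rightarrow> real" where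
  "g_fun x b = (if x = 1/2 then 2 / b - 2
     else (x powr (1 - b) - (1 - x) powr (1 - b)) /
          (x * (1 - x) powr (1 - b) - (1 - x) * x powr (1 - b)))"

definition x_hat :: "real \<Rightarrow> real \<Rightarrow> real \<Rightarrow> real" where
  "x_hat phi h b = (THE x. 1/2 \<le> x \<and> x < 1 \<and> g_fun x b = phi * (h - 1))"

end

theory Submission
  imports Defs
begin

definition gw :: "real \<Rightarrow> real \<Rightarrow> real" where
  "gw c w = (exp (c*w) - 1) * (1 + exp w) / (exp w - exp (c*w))"

lemma cosh_like_mono:
  fixes a b :: real assumes "0 \<le> b" "b < a"
  shows "exp b + exp (-b) < exp a + exp (-a)"
proof -
  have id: "exp a + exp (-a) - (exp b + exp (-b)) = (exp a - exp b) * (1 - exp (-a) * exp (-b))"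
    by (simp add: algebra_simps exp_minus field_simps)
  have "exp a - exp b > 0" using assms by simp
  moreover have "exp (-a) * exp (-b) < 1"
    using assms by (simp add: exp_add[symmetric])
  ultimately have "(exp a - exp b) * (1 - exp (-a) * exp (-b)) > 0" by simp
  with id show ?thesis by linarith
qed

lemma sinh_like_ineq:
  fixes c w :: real assumes c: "0 < c" "c < 1" and w: "0 < w"
  shows "exp (c*w) - exp (-(c*w)) < c * (exp w - exp (-w))"
proof -
  define q where "q u = c * (exp u - exp (-u)) - (exp (c*u) - exp (-(c*u)))" for u :: real
  have "q 0 < q w"
  proof (rule DERIV_pos_imp_increasing_open[OF w])
    fix u :: real assume u: "0 < u" "u < w"
    have "DERIV q u :> c * (exp u + exp (-u)) - c * (exp (c*u) + exp (-(c*u)))"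
      unfolding q_def by (rule derivative_eq_intros refl | simp)+ (simp add: algebra_simps)
    moreover have "c * (exp u + exp (-u)) - c * (exp (c*u) + exp (-(c*u))) > 0"
    proof -
      have "c*u < u" using c u by simp
      hence "exp (c*u) + exp (-(c*u)) < exp u + exp (-u)"
        using cosh_like_mono[of "c*u" u] c u by simp
      hence "c * (exp (c*u) + exp (-(c*u))) < c * (exp u + exp (-u))"
        using c by (intro mult_strict_left_mono) auto
      thus ?thesis by simp
    qed
    ultimately show "\<exists>y. DERIV q u :> y \<and> y > 0" by blast
  next
    show "continuous_on {0..w} q" unfolding q_def by (intro continuous_intros)
  qed
  thus ?thesis by (simp add: q_def)
qed

lemma gw_den_pos: fixes c w :: real assumes "c < 1" "0 < w" shows "exp (c*w) < exp w"
proof -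
  have "c*w < 1*w" using mult_strict_right_mono[OF assms] .
  thus ?thesis by simp
qed

lemma gw_deriv_pos:
  fixes c w :: real assumes c: "0 < c" "c < 1" and w: "0 < w"
  shows "0 < c*exp (c*w)*((exp w)^2-1) - exp w*((exp (c*w))^2-1)"
proof -
  define E where "E = exp (c*w)"
  define R where "R = exp w"
  have E: "E > 0" and R: "R > 0" by (auto simp: E_def R_def)
  have "E - 1/E < c*(R - 1/R)"
    using sinh_like_ineq[OF c w] by (simp add: E_def R_def exp_minus divide_inverse)
  hence "(E - 1/E) * (E*R) < c*(R - 1/R) * (E*R)"
    using E R by (intro mult_strict_right_mono) auto
  moreover have "(E - 1/E) * (E*R) = E*E*R - R" using E R by (simp add: field_simps)
  moreover have "c*(R - 1/R) * (E*R) = c*(R*R*E - E)" using E R by (simp add: field_simps)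
  ultimately have "E*E*R - R < c*(R*R*E - E)" by simp
  thus ?thesis by (simp add: E_def[symmetric] R_def[symmetric] power2_eq_square algebra_simps)
qed

lemma gw_has_deriv:
  fixes c w :: real assumes c: "c < 1" and w: "0 < w"
  shows "DERIV (gw c) w :> (c*exp (c*w)*((exp w)^2-1) - exp w*((exp (c*w))^2-1)) / (exp w - exp (c*w))^2"
proof -
  have ne: "exp w - exp (c*w) \<noteq> 0" using gw_den_pos[OF c w] by linarith
  have "DERIV (gw c) w :> ((c*exp (c*w)*(1+exp w) + (exp (c*w)-1)*exp w)*(exp w - exp (c*w)) - (exp (c*w)-1)*(1+exp w)*(exp w - c*exp (c*w)))/(exp w - exp (c*w))^2"
    unfolding gw_def[abs_def]
    apply (rule derivative_eq_intros refl)+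
    using ne apply simp
    apply (simp add: power2_eq_square algebra_simps)
    done
  moreover have "((c*exp (c*w)*(1+exp w) + (exp (c*w)-1)*exp w)*(exp w - exp (c*w)) - (exp (c*w)-1)*(1+exp w)*(exp w - c*exp (c*w)))
     = c*exp (c*w)*((exp w)^2-1) - exp w*((exp (c*w))^2-1)"
    by (simp add: algebra_simps power2_eq_square)
  ultimately show ?thesis by simp
qed

lemma gw_strict_mono:
  fixes c :: real assumes c: "0 < c" "c < 1" and w: "0 < w1" "w1 < w2"
  shows "gw c w1 < gw c w2"
proof (rule DERIV_pos_imp_increasing_open[OF w(2)])
  fix u assume u: "w1 < u" "u < w2"
  hence u0: "0 < u" using w by simp
  have "exp u - exp (c*u) \<noteq> 0" using gw_den_pos[OF c(2) u0] by linarith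
  hence "(c*exp (c*u)*((exp u)^2-1) - exp u*((exp (c*u))^2-1)) / (exp u - exp (c*u))^2 > 0"
    using gw_deriv_pos[OF c u0] by simp
  thus "\<exists>y. DERIV (gw c) u :> y \<and> 0 < y" using gw_has_deriv[OF c(2) u0] by blast
next
  have "\<forall>u\<in>{w1..w2}. exp u - exp (c*u) \<noteq> 0" using gw_den_pos[OF c(2)] w by force
  thus "continuous_on {w1..w2} (gw c)" unfolding gw_def[abs_def]
    by (intro continuous_intros) auto
qed

lemma exp_quot_lim:
  fixes c :: real
  shows "((\<lambda>y. (exp (c*y) - 1) / y) \<longlongrightarrow> c) (at_right 0)"
proof -
  have "DERIV (\<lambda>y. exp (c*y)) 0 :> c"
    by (rule derivative_eq_intros refl)+ simp
  hence "((\<lambda>y. exp (c*y)) has_field_derivative c) (at 0 within {0<..})"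
    by (rule has_field_derivative_at_within)
  thus ?thesis by (simp add: has_field_derivative_iff)
qed

lemma gw_lim:
  fixes c :: real assumes c: "c < 1"
  shows "((gw c) \<longlongrightarrow> 2*c/(1-c)) (at_right 0)"
proof -
  have ev: "eventually (\<lambda>w. ((exp (c*w) - 1)/w) * (1 + exp w) / ((exp (1*w) - 1)/w - (exp (c*w) - 1)/w) = gw c w) (at_right 0)"
    unfolding eventually_at_right_field
  proof (intro exI[of _ 1] conjI allI impI)
    fix w :: real assume w: "0 < w" "w < 1"
    have "exp w - exp (c*w) \<noteq> 0" using gw_den_pos[OF c w(1)] by linarith
    thus "((exp (c*w) - 1)/w) * (1 + exp w) / ((exp (1*w) - 1)/w - (exp (c*w) - 1)/w) = gw c w"
      using w by (simp add: gw_def field_simps)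
  qed simp
  have "((\<lambda>w. ((exp (c*w) - 1)/w) * (1 + exp w) / ((exp (1*w) - 1)/w - (exp (c*w) - 1)/w)) \<longlongrightarrow> c * (1 + exp 0) / (1 - c)) (at_right 0)"
    using c by (intro tendsto_intros exp_quot_lim) auto
  moreover have "c * (1 + exp 0) / (1 - c) = 2*c/(1-c)" by simp
  ultimately have "((\<lambda>w. ((exp (c*w) - 1)/w) * (1 + exp w) / ((exp (1*w) - 1)/w - (exp (c*w) - 1)/w)) \<longlongrightarrow> 2*c/(1-c)) (at_right 0)"
    by metis
  thus ?thesis using ev by (rule tendsto_cong[THEN iffD1, rotated])
qed

lemma gw_gt:
  fixes c w :: real assumes c: "0 < c" "c < 1" and w: "0 < w"
  shows "2*c/(1-c) < gw c w"
proof -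
  have "eventually (\<lambda>u. gw c u \<le> gw c (w/2)) (at_right 0)"
    unfolding eventually_at_right_field
    by (rule exI[of _ "w/2"]) (use w gw_strict_mono[OF c] in \<open>auto intro: less_imp_le\<close>)
  hence "2*c/(1-c) \<le> gw c (w/2)"
    by (intro tendsto_upperbound[OF gw_lim[OF c(2)]]) auto
  also have "\<dots> < gw c w" using gw_strict_mono[OF c, of "w/2" w] w by simp
  finally show ?thesis .
qed

lemma gw_ge_exp:
  fixes c w :: real assumes c: "0 < c" "c < 1" and w: "0 < w"
  shows "exp (c*w) - 1 \<le> gw c w"
proof -
  have d: "0 < exp w - exp (c*w)" using gw_den_pos[OF c(2) w] by simp
  have "exp (c*w) - 1 \<ge> 0" using c w by simp
  moreover have "exp w - exp (c*w) \<le> 1 + exp w" using exp_gt_zero[of "c*w"] by linarith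
  ultimately have "(exp (c*w) - 1) * (exp w - exp (c*w)) \<le> (exp (c*w) - 1) * (1 + exp w)"
    by (intro mult_left_mono) auto
  thus ?thesis unfolding gw_def using d by (subst pos_le_divide_eq[OF d]) simp
qed

lemma gw_cont:
  fixes c :: real assumes c: "c < 1" and ab: "0 < a"
  shows "continuous_on {a..b} (gw c)"
proof -
  have "\<forall>u\<in>{a..b}. exp u - exp (c*u) \<noteq> 0" using gw_den_pos[OF c] ab by force
  thus ?thesis unfolding gw_def[abs_def] by (intro continuous_intros) auto
qed

lemma div_div_same: fixes A D M :: real assumes "M \<noteq> 0" shows "(A/M)/(D/M) = A/D"
  using assms by (cases "D = 0") (simp_all add: field_simps)

lemma g_fun_gw:
  fixes x b :: real assumes x: "1/2 < x" "x < 1" and b: "0 < b" "b < 1"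
  shows "g_fun x b = gw (1-b) (ln (x/(1-x)))"
proof -
  define c where "c = 1 - b"
  have c: "0 < c" "c < 1" using b by (auto simp: c_def)
  define P where "P = x powr c"
  define Q where "Q = (1-x) powr c"
  have x0: "0 < x" "0 < 1 - x" using x by auto
  have Q0: "Q > 0" using x0 by (simp add: Q_def)
  have P0: "P > 0" using x0 by (simp add: P_def)
  have r1: "x/(1-x) > 1" using x by (simp add: field_simps)
  hence w0: "ln (x/(1-x)) > 0" by simp
  have R: "exp (ln (x/(1-x))) = x/(1-x)" using x0 by simp
  have E: "exp (c * ln (x/(1-x))) = P/Q"
    using x0 by (simp add: P_def Q_def powr_def ln_div exp_diff algebra_simps)
  have ne: "exp (ln (x/(1-x))) - exp (c * ln (x/(1-x))) \<noteq> 0"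
    using gw_den_pos[OF c(2) w0] by linarith
  hence ne2: "x/(1-x) - P/Q \<noteq> 0" using R E by simp
  hence ne3: "x*Q - (1-x)*P \<noteq> 0" using x0 Q0 by (simp add: field_simps)
  have "g_fun x b = (P - Q) / (x*Q - (1-x)*P)"
    using x by (simp add: g_fun_def P_def Q_def c_def)
  also have "\<dots> = (P/Q - 1) * (1 + x/(1-x)) / (x/(1-x) - P/Q)"
  proof -
    have a: "(P/Q - 1) * (1 + x/(1-x)) = (P - Q)/(Q*(1-x))" using x0 Q0 by (simp add: field_simps)
    have d: "x/(1-x) - P/Q = (x*Q - (1-x)*P)/((1-x)*Q)" using x0 Q0 by (simp add: field_simps)
    have "(1-x)*Q = Q*(1-x)" by simp
    thus ?thesis unfolding a d using x0 Q0 div_div_same[of "Q*(1-x)" "P-Q" "x*Q - (1-x)*P"] by simp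
  qed
  also have "\<dots> = gw (1-b) (ln (x/(1-x)))"
    unfolding gw_def c_def[symmetric] R E ..
  finally show ?thesis .
qed

lemma ln_odds_inv:
  fixes w :: real
  shows "ln ((exp w/(1+exp w)) / (1 - exp w/(1+exp w))) = w"
proof -
  have p: "1 + exp w > 0" by (simp add: add_pos_pos)
  have "1 - exp w/(1+exp w) = 1/(1+exp w)"
    using p by (simp add: field_simps)
  hence "(exp w/(1+exp w)) / (1 - exp w/(1+exp w)) = exp w"
    using p by (simp add: field_simps)
  thus ?thesis by simp
qed

lemma ln_odds_mono:
  fixes x1 x2 :: real assumes "0 < x1" "x1 < x2" "x2 < 1"
  shows "ln (x1/(1-x1)) < ln (x2/(1-x2))"
proof -
  have "x1/(1-x1) < x2/(1-x2)" using assms by (simp add: field_simps)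
  thus ?thesis using assms by simp
qed

lemma g_fun_mono:
  fixes b x1 x2 :: real assumes b: "0 < b" "b < 1" and x: "1/2 < x1" "x1 < x2" "x2 < 1"
  shows "g_fun x1 b < g_fun x2 b"
proof -
  have r1: "x1/(1-x1) > 1" using x by (simp add: field_simps)
  hence w0: "ln (x1/(1-x1)) > 0" by simp
  show ?thesis
    using gw_strict_mono[of "1-b", OF _ _ w0 ln_odds_mono[of x1 x2]] b x
    by (simp add: g_fun_gw)
qed

lemma g_fun_half: "g_fun (1/2) b = 2/b - 2" by (simp add: g_fun_def)

lemma g_fun_gt_half:
  fixes b x :: real assumes b: "0 < b" "b < 1" and x: "1/2 < x" "x < 1"
  shows "2/b - 2 < g_fun x b"
proof -
  have r1: "x/(1-x) > 1" using x by (simp add: field_simps)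
  hence w0: "ln (x/(1-x)) > 0" by simp
  have "2*(1-b)/(1-(1-b)) < gw (1-b) (ln (x/(1-x)))"
    using gw_gt[OF _ _ w0, of "1-b"] b by simp
  moreover have "2*(1-b)/(1-(1-b)) = 2/b - 2" using b by (simp add: field_simps)
  ultimately show ?thesis using g_fun_gw[OF x b] by simp
qed

lemma g_fun_unique:
  fixes b K x1 x2 :: real assumes b: "0 < b" "b < 1"
    and x1: "1/2 \<le> x1" "x1 < 1" "g_fun x1 b = K"
    and x2: "1/2 \<le> x2" "x2 < 1" "g_fun x2 b = K"
  shows "x1 = x2"
proof (rule ccontr)
  assume ne: "x1 \<noteq> x2"
  { fix u v :: real assume u: "1/2 \<le> u" "u < v" "v < 1" "g_fun u b = g_fun v b"
    have False
    proof (cases "u = 1/2")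
      case True
      have "g_fun u b = 2/b - 2" unfolding True by (rule g_fun_half)
      thus False using g_fun_gt_half[OF b, of v] u True by simp
    next
      case False
      thus False using g_fun_mono[OF b, of u v] u by simp
    qed }
  note * = this
  show False
  proof (cases "x1 < x2")
    case True thus False using *[of x1 x2] x1 x2 by simp
  next
    case False thus False using *[of x2 x1] x1 x2 ne by simp
  qed
qed

lemma g_fun_exists:
  fixes b K :: real assumes b: "0 < b" "b < 1" and K: "2/(K+2) \<le> b" "K > 0"
  shows "\<exists>x. 1/2 \<le> x \<and> x < 1 \<and> g_fun x b = K"
proof -
  have "2 \<le> b*(K+2)" using K b by (simp add: field_simps)
  hence Kb: "2/b - 2 \<le> K" using b by (simp add: field_simps)
  show ?thesis
  proof (cases "2/b - 2 = K")
    case True thus ?thesis by (intro exI[of _ "1/2"]) (simp add: g_fun_half)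
  next
    case False
    hence Klt: "2/b - 2 < K" using Kb by simp
    define c where "c = 1 - b"
    have c: "0 < c" "c < 1" using b by (auto simp: c_def)
    have lim: "2*c/(1-c) = 2/b - 2" using b by (simp add: c_def field_simps)
    have "eventually (\<lambda>w. gw c w < K) (at_right 0)"
      using order_tendstoD(2)[OF gw_lim[OF c(2)], of K] Klt lim by simp
    moreover have "eventually (\<lambda>w. 0 < w) (at_right (0::real))"
      by (simp add: eventually_at_right_field) (auto intro: exI[of _ 1])
    ultimately have "eventually (\<lambda>w. 0 < w \<and> gw c w < K) (at_right 0)"
      by (rule eventually_conj[rotated])
    then obtain w1 where w1: "0 < w1" "gw c w1 < K"
      using eventually_happens'[OF trivial_limit_at_right_real] by blast
    define w2 where "w2 = max w1 (ln (K+1)/c)"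
    have w2: "w1 \<le> w2" "0 < w2" using w1 by (auto simp: w2_def)
    have "c*(ln (K+1)/c) \<le> c*w2" using c by (intro mult_left_mono) (auto simp: w2_def)
    hence "ln (K+1) \<le> c*w2" using c by simp
    hence "K+1 \<le> exp (c*w2)" using K
      by (metis exp_ln exp_le_cancel_iff add_pos_pos zero_less_one)
    hence "K \<le> gw c w2" using gw_ge_exp[OF c w2(2)] by simp
    then obtain w where w: "w1 \<le> w" "w \<le> w2" "gw c w = K"
      using IVT'[of "gw c" w1 K w2, OF less_imp_le[OF w1(2)] _ w2(1) gw_cont[OF c(2) w1(1)]] by blast
    define x where "x = exp w/(1+exp w)"
    have w0: "0 < w" using w w1 by simp
    have x: "1/2 < x" "x < 1" using w0 by (auto simp: x_def field_simps add_pos_pos)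
    have "g_fun x b = K"
      using g_fun_gw[OF x b] ln_odds_inv[of w] w(3) by (simp add: x_def c_def)
    thus ?thesis using x by (intro exI[of _ x]) simp
  qed
qed

lemma x_hat_props:
  fixes b phi h :: real assumes b: "0 < b" "b < 1" and K: "2/(phi*(h-1)+2) \<le> b" "phi*(h-1) > 0"
  shows "1/2 \<le> x_hat phi h b" "x_hat phi h b < 1" "g_fun (x_hat phi h b) b = phi*(h-1)"
    and "\<And>x. 1/2 \<le> x \<Longrightarrow> x < 1 \<Longrightarrow> g_fun x b = phi*(h-1) \<Longrightarrow> x = x_hat phi h b"
proof -
  obtain x0 where x0: "1/2 \<le> x0" "x0 < 1" "g_fun x0 b = phi*(h-1)"
    using g_fun_exists[OF b K] by blast
  have ex: "\<exists>!x. 1/2 \<le> x \<and> x < 1 \<and> g_fun x b = phi*(h-1)"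
    using x0 g_fun_unique[OF b] by blast
  have th: "1/2 \<le> x_hat phi h b \<and> x_hat phi h b < 1 \<and> g_fun (x_hat phi h b) b = phi*(h-1)"
    unfolding x_hat_def by (rule theI'[OF ex])
  thus "1/2 \<le> x_hat phi h b" "x_hat phi h b < 1" "g_fun (x_hat phi h b) b = phi*(h-1)" by auto
  fix x assume "1/2 \<le> x" "x < 1" "g_fun x b = phi*(h-1)"
  thus "x = x_hat phi h b" using th g_fun_unique[OF b] by blast
qed

definition mmf :: "real \<Rightarrow> real \<Rightarrow> real \<Rightarrow> real" where
  "mmf ps pd y = (ps*y + pd*(1-y))/(ps+pd)"

definition Fx :: "real \<Rightarrow> real \<Rightarrow> real \<Rightarrow> real" where
  "Fx b x m = x powr b * m / (x powr b * m + (1-x) powr b * (1-m))"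

lemma mmf_diff: fixes ps pd y y' :: real assumes "0 < pd" "pd < ps"
  shows "mmf ps pd y' - mmf ps pd y = (ps-pd)/(ps+pd) * (y' - y)"
proof -
  have "mmf ps pd y' - mmf ps pd y = ((ps*y' + pd*(1-y')) - (ps*y + pd*(1-y)))/(ps+pd)"
    by (simp add: mmf_def diff_divide_distrib)
  also have "(ps*y' + pd*(1-y')) - (ps*y + pd*(1-y)) = (ps-pd)*(y'-y)" by (simp add: algebra_simps)
  finally show ?thesis by simp
qed

lemma mmf_mono: fixes ps pd y y' :: real assumes "0 < pd" "pd < ps" "y \<le> y'"
  shows "mmf ps pd y \<le> mmf ps pd y'"
proof -
  have "(ps-pd)/(ps+pd) * (y' - y) \<ge> 0" using assms by simp
  thus ?thesis using mmf_diff[OF assms(1,2), of y' y] by linarith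
qed

lemma mmf_range: fixes ps pd y :: real assumes "0 < pd" "pd < ps" "1/2 \<le> y" "y < 1"
  shows "1/2 \<le> mmf ps pd y" "mmf ps pd y < 1"
proof -
  have "mmf ps pd y - mmf ps pd (1/2) = (ps-pd)/(ps+pd) * (y - 1/2)" by (rule mmf_diff[OF assms(1,2)])
  moreover have "mmf ps pd (1/2) = 1/2" using assms by (simp add: mmf_def field_simps)
  moreover have "(ps-pd)/(ps+pd) * (y - 1/2) \<ge> 0" using assms by simp
  ultimately show "1/2 \<le> mmf ps pd y" by linarith
  have "ps*y < ps*1" using assms by (intro mult_strict_left_mono) auto
  moreover have "pd*(1-y) \<le> pd*1" using assms by (intro mult_left_mono) auto
  ultimately have "ps*y + pd*(1-y) < ps + pd" by simp
  thus "mmf ps pd y < 1" using assms by (simp add: mmf_def)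
qed

lemma Fx_mono:
  fixes b x x' m m' :: real
  assumes b: "0 < b" and x: "0 < x" "x \<le> x'" "x' < 1" and m: "0 < m" "m \<le> m'" "m' < 1"
  shows "Fx b x m \<le> Fx b x' m'"
proof -
  define A where "A = x powr b * m"
  define B where "B = (1-x) powr b * (1-m)"
  define A' where "A' = x' powr b * m'"
  define B' where "B' = (1-x') powr b * (1-m')"
  have A: "0 < A" "A \<le> A'" unfolding A_def A'_def using x m b
    by (auto intro!: mult_mono powr_mono2)
  have B: "0 < B'" "B' \<le> B" unfolding B_def B'_def using x m b
    by (auto intro!: mult_mono powr_mono2)
  have "A * B' \<le> A' * B" using A B by (intro mult_mono) auto
  hence "A * (A' + B') \<le> A' * (A + B)" by (simp add: algebra_simps)
  hence "A / (A + B) \<le> A' / (A' + B')" using A B by (simp add: field_simps)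
  thus ?thesis by (simp add: Fx_def A_def B_def A'_def B'_def)
qed

lemma Fx_range:
  fixes b x m :: real
  assumes b: "0 < b" and x: "1/2 < x" "x < 1" and m: "1/2 \<le> m" "m < 1"
  shows "1/2 < Fx b x m" "Fx b x m < 1"
proof -
  define A where "A = x powr b * m"
  define B where "B = (1-x) powr b * (1-m)"
  have "(1-x) powr b < x powr b" using x b by (intro powr_less_mono2) auto
  hence "(1-x) powr b * (1-m) < x powr b * m"
    using mult_less_le_imp_less[of "(1-x) powr b" "x powr b" "1-m" m] m x by auto
  hence AB: "B < A" "0 < B" using x m by (auto simp: A_def B_def)
  have "1/2 < A/(A+B)" using AB by (simp add: field_simps)
  thus "1/2 < Fx b x m" by (simp add: Fx_def A_def B_def)
  have "A/(A+B) < 1" using AB by (simp add: field_simps)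
  thus "Fx b x m < 1" by (simp add: Fx_def A_def B_def)
qed

lemma PQ_facts:
  fixes c x :: real assumes c: "0 < c" "c < 1" and x: "1/2 < x" "x < 1"
  shows "(1-x) powr c < x powr c" "(1-x) * x powr c < x * (1-x) powr c"
proof -
  show "(1-x) powr c < x powr c" using x c by (intro powr_less_mono2) auto
  have r: "1 < x/(1-x)" using x by (simp add: field_simps)
  have "(x/(1-x)) powr c < (x/(1-x)) powr 1" using r c by (intro powr_less_mono) auto
  hence "x powr c / (1-x) powr c < x/(1-x)" using x by (simp add: powr_divide)
  thus "(1-x) * x powr c < x * (1-x) powr c" using x by (simp add: field_simps)
qed

lemma fp_m:
  fixes b x m :: real assumes b: "0 < b" "b < 1" and x: "0 < x" "x < 1" and m: "0 < m" "m < 1"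
    and fp: "x = Fx b x m"
  shows "m = x powr (1-b) / (x powr (1-b) + (1-x) powr (1-b))"
proof -
  define P where "P = x powr (1-b)"
  define Q where "Q = (1-x) powr (1-b)"
  have P0: "P > 0" and Q0: "Q > 0" using x by (auto simp: P_def Q_def)
  have xe: "x = x powr b * P" using x by (simp add: P_def powr_add[symmetric])
  have ye: "1 - x = (1-x) powr b * Q" using x by (simp add: Q_def powr_add[symmetric])
  have den: "x powr b * m + (1-x) powr b * (1-m) > 0" using x m by (intro add_pos_pos) auto
  have "x * (x powr b * m + (1-x) powr b * (1-m)) = x powr b * m"
    using fp den by (simp add: Fx_def field_simps)
  hence "x * ((1-x) powr b * (1-m)) = x powr b * m * (1-x)" by (simp add: algebra_simps)
  hence "(x powr b * P) * ((1-x) powr b * (1-m)) = x powr b * m * ((1-x) powr b * Q)"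
    using xe ye by metis
  hence "(x powr b * (1-x) powr b) * (P * (1-m)) = (x powr b * (1-x) powr b) * (m * Q)"
    by (simp add: algebra_simps)
  moreover have "x powr b * (1-x) powr b > 0" using x by simp
  ultimately have "P * (1-m) = m * Q" using x by simp
  hence "m * (P + Q) = P" by (simp add: algebra_simps)
  thus ?thesis using P0 Q0 by (simp add: P_def[symmetric] Q_def[symmetric] field_simps)
qed

lemma y_gap:
  fixes ps pd phi x y :: real assumes "0 < pd" "pd < ps"
  shows "phi*x + (1-phi)*mmf ps pd y - y = pd/(ps-pd) * (phi*(ps/pd-1)*(x - mmf ps pd y) - (2*mmf ps pd y - 1))"
proof -
  define m where "m = mmf ps pd y"
  have a: "ps - pd \<noteq> 0" "ps + pd \<noteq> 0" "pd \<noteq> 0" using assms by auto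
  have e: "(ps+pd)*m = ps*y + pd*(1-y)" using a by (simp add: m_def mmf_def)
  have "(m-y)*(ps-pd) + pd*(2*m-1) = (ps+pd)*m - (ps*y + pd*(1-y))" by (simp add: algebra_simps)
  hence "(m-y)*(ps-pd) = -(pd*(2*m-1))" using e by simp
  hence my: "m - y = -(pd*(2*m-1))/(ps-pd)"
  proof -
    assume eq: "(m-y)*(ps-pd) = -(pd*(2*m-1))"
    have "m - y = ((m-y)*(ps-pd))/(ps-pd)" using a by simp
    also have "\<dots> = -(pd*(2*m-1))/(ps-pd)" by (simp only: eq)
    finally show ?thesis .
  qed
  have k: "pd/(ps-pd) * (ps/pd - 1) = 1"
  proof -
    have "ps/pd - 1 = (ps-pd)/pd" using a by (simp add: field_simps)
    thus ?thesis using a by simp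
  qed
  have gen: "\<And>u1 v1::real. u1*(phi * v1*(x-m) - (2*m-1)) = phi*(x-m)*(u1 * v1) - u1*(2*m-1)"
    by (simp add: algebra_simps)
  have my2: "(pd/(ps-pd))*(2*m-1) = y - m" using my by simp
  have "pd/(ps-pd) * (phi*(ps/pd-1)*(x - m) - (2*m - 1)) = phi*(x-m) + (m - y)"
    unfolding gen k my2 by simp
  thus ?thesis by (simp add: m_def[symmetric] algebra_simps)
qed

lemma lin_div_helper: fixes K D N S :: real shows "K*(D/S) - N/S = (K*D - N)/S"
  by (simp add: diff_divide_distrib)

lemma gap_g:
  fixes b x K :: real assumes b: "0 < b" "b < 1" and x: "1/2 < x" "x < 1"
  defines "P \<equiv> x powr (1-b)" and "Q \<equiv> (1-x) powr (1-b)"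
  shows "K*(x - P/(P+Q)) - (2*(P/(P+Q)) - 1) = (x*Q - (1-x)*P)/(P+Q) * (K - g_fun x b)"
    and "0 < (x*Q - (1-x)*P)/(P+Q)"
proof -
  have P0: "P > 0" and Q0: "Q > 0" using x by (auto simp: P_def Q_def)
  have D: "0 < x*Q - (1-x)*P" using PQ_facts(2)[of "1-b" x] b x by (simp add: P_def Q_def)
  have g: "g_fun x b = (P - Q)/(x*Q - (1-x)*P)" using x by (simp add: g_fun_def P_def Q_def)
  show "0 < (x*Q - (1-x)*P)/(P+Q)" using D P0 Q0 by simp
  have S: "P + Q \<noteq> 0" using P0 Q0 by simp
  have 1: "x - P/(P+Q) = (x*Q - (1-x)*P)/(P+Q)" using S by (simp add: field_simps)
  have 2: "2*(P/(P+Q)) - 1 = (P-Q)/(P+Q)" using S by (simp add: field_simps)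
  have 3: "(x*Q - (1-x)*P)/(P+Q) * (K - (P - Q)/(x*Q - (1-x)*P)) = (K*(x*Q - (1-x)*P) - (P-Q))/(P+Q)"
  proof -
    have "K - (P - Q)/(x*Q - (1-x)*P) = (K*(x*Q - (1-x)*P) - (P-Q))/(x*Q - (1-x)*P)"
      using D by (simp add: field_simps)
    thus ?thesis using D by simp
  qed
  show "K*(x - P/(P+Q)) - (2*(P/(P+Q)) - 1) = (x*Q - (1-x)*P)/(P+Q) * (K - g_fun x b)"
    unfolding g 1 2 3 by (rule lin_div_helper)
qed

lemma mmf_inv: fixes ps pd M :: real assumes "0 < pd" "pd < ps"
  shows "mmf ps pd (((ps+pd)*M - pd)/(ps-pd)) = M"
proof -
  have a: "ps - pd \<noteq> 0" "ps + pd \<noteq> 0" using assms by auto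
  define z where "z = ((ps+pd)*M - pd)/(ps-pd)"
  have "(ps-pd)*z = (ps+pd)*M - pd" using a by (simp add: z_def)
  moreover have "ps*z + pd*(1-z) = pd + (ps-pd)*z" by (simp add: algebra_simps)
  ultimately have "ps*(((ps+pd)*M - pd)/(ps-pd)) + pd*(1 - ((ps+pd)*M - pd)/(ps-pd)) = (ps+pd)*M"
    unfolding z_def[symmetric] by simp
  thus ?thesis using a by (simp add: mmf_def)
qed

lemma Fx_fix:
  fixes b x :: real assumes b: "0 < b" "b < 1" and x: "0 < x" "x < 1"
  shows "Fx b x (x powr (1-b) / (x powr (1-b) + (1-x) powr (1-b))) = x"
proof -
  define P where "P = x powr (1-b)"
  define Q where "Q = (1-x) powr (1-b)"
  have P0: "P > 0" and Q0: "Q > 0" using x by (auto simp: P_def Q_def)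
  have xe: "x powr b * P = x" using x by (simp add: P_def powr_add[symmetric])
  have ye: "(1-x) powr b * Q = 1 - x" using x by (simp add: Q_def powr_add[symmetric])
  have S: "P + Q \<noteq> 0" using P0 Q0 by simp
  have 1: "1 - P/(P+Q) = Q/(P+Q)" using S by (simp add: field_simps)
  have "Fx b x (P/(P+Q)) = ((x powr b * P)/(P+Q)) / ((x powr b * P + (1-x) powr b * Q)/(P+Q))"
    unfolding Fx_def 1 by (simp add: add_divide_distrib)
  also have "\<dots> = (x powr b * P) / (x powr b * P + (1-x) powr b * Q)"
    using S by (rule div_div_same)
  also have "\<dots> = x" unfolding xe ye by simp
  finally show ?thesis by (simp add: P_def Q_def)
qed

lemma ev_inc_conv: fixes f :: "nat \<Rightarrow> real"
  assumes "\<forall>t\<ge>T0. f t \<le> f (Suc t)" "\<forall>t. f t \<le> B" shows "\<exists>L. f \<longlonglongrightarrow> L"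
proof -
  have "incseq (\<lambda>k. f (k + T0))" using assms(1) by (intro incseq_SucI) auto
  then obtain L where "(\<lambda>k. f (k + T0)) \<longlonglongrightarrow> L"
    using incseq_convergent[of "\<lambda>k. f (k + T0)" B] assms(2) by blast
  thus ?thesis using LIMSEQ_offset by blast
qed

lemma ev_dec_conv: fixes f :: "nat \<Rightarrow> real"
  assumes "\<forall>t\<ge>T0. f (Suc t) \<le> f t" "\<forall>t. B \<le> f t" shows "\<exists>L. f \<longlonglongrightarrow> L"
proof -
  have "decseq (\<lambda>k. f (k + T0))" using assms(1) by (intro decseq_SucI) auto
  then obtain L where "(\<lambda>k. f (k + T0)) \<longlonglongrightarrow> L"
    using decseq_convergent[of "\<lambda>k. f (k + T0)" B] assms(2) by blast
  thus ?thesis using LIMSEQ_offset by blast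
qed

lemma mono_on_from: fixes f :: "nat \<Rightarrow> real"
  assumes "\<forall>t\<ge>T0. f t \<le> f (Suc t)" "T0 \<le> T'"
  shows "monotone_on {T'..} (\<le>) (\<le>) f"
  unfolding monotone_on_def
proof (intro ballI impI)
  fix m n assume mn: "m \<in> {T'..}" "n \<in> {T'..}" "m \<le> n"
  from mn(3) show "f m \<le> f n"
  proof (induction rule: dec_induct)
    case (step k) thus ?case using assms mn(1) by (meson atLeast_iff le_trans order_trans)
  qed simp
qed

lemma anti_on_from: fixes f :: "nat \<Rightarrow> real"
  assumes "\<forall>t\<ge>T0. f (Suc t) \<le> f t" "T0 \<le> T'"
  shows "monotone_on {T'..} (\<le>) (\<ge>) f"
  unfolding monotone_on_def
proof (intro ballI impI)
  fix m n assume mn: "m \<in> {T'..}" "n \<in> {T'..}" "m \<le> n"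
  from mn(3) show "f n \<le> f m"
  proof (induction rule: dec_induct)
    case (step k) thus ?case using assms mn(1) by (meson atLeast_iff le_trans order_trans)
  qed simp
qed

lemma sign_pattern:
  fixes a c :: "nat \<Rightarrow> real"
  assumes P1: "\<And>t. a t \<ge> 0 \<Longrightarrow> c t \<ge> 0 \<Longrightarrow> a (Suc t) \<ge> 0"
    and P1': "\<And>t. a t \<le> 0 \<Longrightarrow> c t \<le> 0 \<Longrightarrow> a (Suc t) \<le> 0"
    and P2: "\<And>t. c t \<ge> 0 \<Longrightarrow> a (Suc t) \<ge> 0 \<Longrightarrow> c (Suc t) \<ge> 0"
    and P2': "\<And>t. c t \<le> 0 \<Longrightarrow> a (Suc t) \<le> 0 \<Longrightarrow> c (Suc t) \<le> 0"
  shows "\<exists>T0. ((\<forall>t\<ge>T0. a t \<ge> 0) \<or> (\<forall>t\<ge>T0. a t \<le> 0)) \<and> ((\<forall>t\<ge>T0. c t \<ge> 0) \<or> (\<forall>t\<ge>T0. c t \<le> 0))"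
proof (cases "\<exists>t0. a t0 \<ge> 0 \<and> c t0 \<ge> 0")
  case True
  then obtain t0 where t0: "a t0 \<ge> 0" "c t0 \<ge> 0" by blast
  have "\<forall>t\<ge>t0. a t \<ge> 0 \<and> c t \<ge> 0"
  proof (intro allI impI)
    fix t assume "t0 \<le> t"
    thus "a t \<ge> 0 \<and> c t \<ge> 0"
    proof (induction rule: dec_induct)
      case base thus ?case using t0 by simp
    next
      case (step k) thus ?case using P1 P2 by blast
    qed
  qed
  thus ?thesis by blast
next
  case F1: False
  show ?thesis
  proof (cases "\<exists>t0. a t0 \<le> 0 \<and> c t0 \<le> 0")
    case True
    then obtain t0 where t0: "a t0 \<le> 0" "c t0 \<le> 0" by blast
    have "\<forall>t\<ge>t0. a t \<le> 0 \<and> c t \<le> 0"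
    proof (intro allI impI)
      fix t assume "t0 \<le> t"
      thus "a t \<le> 0 \<and> c t \<le> 0"
      proof (induction rule: dec_induct)
        case base thus ?case using t0 by simp
      next
        case (step k) thus ?case using P1' P2' by blast
      qed
    qed
    thus ?thesis by blast
  next
    case F2: False
    show ?thesis
    proof (cases "c 0 \<ge> 0")
      case True
      have "\<forall>t. c t \<ge> 0 \<and> a t \<le> 0"
      proof
        fix t show "c t \<ge> 0 \<and> a t \<le> 0"
        proof (induction t)
          case 0
          have "\<not> a 0 \<ge> 0" using True F1 by blast
          thus ?case using True by simp
        next
          case (Suc k)
          have "\<not> a (Suc k) \<ge> 0"
          proof
            assume "a (Suc k) \<ge> 0"
            hence "c (Suc k) \<ge> 0" using P2 Suc by blast
            thus False using F1 \<open>a (Suc k) \<ge> 0\<close> by blast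
          qed
          hence "a (Suc k) \<le> 0" by simp
          moreover have "c (Suc k) \<ge> 0" using F2 \<open>a (Suc k) \<le> 0\<close> by force
          ultimately show ?case by simp
        qed
      qed
      thus ?thesis by (intro exI[of _ 0]) blast
    next
      case False
      hence c0: "c 0 \<le> 0" by simp
      have "\<forall>t. c t \<le> 0 \<and> a t \<ge> 0"
      proof
        fix t show "c t \<le> 0 \<and> a t \<ge> 0"
        proof (induction t)
          case 0
          have "\<not> a 0 \<le> 0" using c0 F2 by blast
          thus ?case using c0 by simp
        next
          case (Suc k)
          have "\<not> a (Suc k) \<le> 0"
          proof
            assume "a (Suc k) \<le> 0"
            hence "c (Suc k) \<le> 0" using P2' Suc by blast
            thus False using F2 \<open>a (Suc k) \<le> 0\<close> by blast
          qed
          hence "a (Suc k) \<ge> 0" by simp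
          moreover have "c (Suc k) \<le> 0" using F1 \<open>a (Suc k) \<ge> 0\<close> by force
          ultimately show ?case by simp
        qed
      qed
      thus ?thesis by (intro exI[of _ 0]) blast
    qed
  qed
qed

lemma conv_comb:
  fixes phi u v :: real assumes "0 < phi" "phi < 1" "1/2 < u" "u < 1" "1/2 \<le> v" "v < 1"
  shows "1/2 < phi*u + (1-phi) * v" "phi*u + (1-phi) * v < 1"
proof -
  have f1: "phi*(1/2) < phi*u" "phi*u < phi*1" using assms by (intro mult_strict_left_mono; simp)+
  have f2: "(1-phi)*(1/2) \<le> (1-phi) * v" "(1-phi) * v < (1-phi)*1" using assms
    by (intro mult_left_mono mult_strict_left_mono; simp)+
  have g1: "phi/2 < phi*u" "phi*u < phi" using f1 by simp_all
  have g2: "(1-phi)/2 \<le> (1-phi) * v" "(1-phi) * v < 1-phi" using f2 by simp_all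
  have "phi/2 + (1-phi)/2 = 1/2" by (simp add: field_simps)
  thus "1/2 < phi*u + (1-phi) * v" using g1 g2 by linarith
  show "phi*u + (1-phi) * v < 1" using g1 g2 by linarith
qed

lemma ys_formula:
  fixes ps pd phi Xs Ys :: real assumes pd: "0 < pd" "pd < ps" and phi: "0 < phi" "phi < 1"
    and e: "Ys = phi*Xs + (1-phi)*mmf ps pd Ys"
  shows "Ys = (phi*(ps/pd+1)*Xs + 1 - phi)/(phi*(ps/pd) + 2 - phi)"
proof -
  define h where "h = ps/pd"
  have h: "h > 1" using pd by (simp add: h_def)
  have psh: "ps = h*pd" using pd by (simp add: h_def)
  have m: "mmf ps pd Ys = (h*Ys + (1-Ys))/(h+1)"
  proof -
    have "mmf ps pd Ys = (pd*(h*Ys + (1-Ys)))/(pd*(h+1))" unfolding mmf_def psh by (simp add: algebra_simps)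
    thus ?thesis using pd by simp
  qed
  have "Ys*(h+1) = phi*Xs*(h+1) + (1-phi)*(h*Ys + (1-Ys))"
  proof -
    have "Ys*(h+1) = (phi*Xs + (1-phi)*((h*Ys + (1-Ys))/(h+1)))*(h+1)" using e m by simp
    also have "\<dots> = phi*Xs*(h+1) + (1-phi)*(h*Ys + (1-Ys))"
    proof -
      have h1: "h + 1 \<noteq> 0" using h by simp
      thus ?thesis by (simp add: field_simps)
    qed
    finally show ?thesis .
  qed
  moreover have "Ys*(phi*h+2-phi) - (phi*(h+1)*Xs + 1 - phi) = Ys*(h+1) - (phi*Xs*(h+1) + (1-phi)*(h*Ys + (1-Ys)))"
    by (simp add: algebra_simps)
  ultimately have "Ys*(phi*h+2-phi) = phi*(h+1)*Xs + 1 - phi" by simp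
  moreover have "phi*h+2-phi > 0" using h phi
    by (smt (verit) mult_less_cancel_left2)
  ultimately show ?thesis by (simp add: h_def[symmetric] eq_divide_eq)
qed



lemma scalar_dyn:
  fixes X Y :: "nat \<Rightarrow> real" and ps pd phi b :: real and T :: nat
  assumes pd: "0 < pd" "pd < ps" and phi: "0 < phi" "phi < 1" and b: "0 < b" "b < 1"
    and thr: "2/(phi*(ps/pd-1)+2) \<le> b"
    and recX: "\<And>t. X (Suc t) = Fx b (X t) (mmf ps pd (Y t))"
    and recY: "\<And>t. Y (Suc t) = phi * X (Suc t) + (1-phi) * mmf ps pd (Y t)"
    and X0: "1/2 < X 0" "X 0 < 1" and Y0: "1/2 \<le> Y 0" "Y 0 < 1"
    and hyp: "\<forall>t\<ge>T. X t < x_hat phi (ps/pd) b"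
  shows "\<exists>T'>T.
           (monotone_on {T'..} (\<le>) (\<le>) X \<or> monotone_on {T'..} (\<le>) (\<ge>) X) \<and>
           (monotone_on {T'..} (\<le>) (\<le>) Y \<or> monotone_on {T'..} (\<le>) (\<ge>) Y) \<and>
           X \<longlonglongrightarrow> x_hat phi (ps / pd) b \<and>
           Y \<longlonglongrightarrow> (phi * (ps / pd + 1) * x_hat phi (ps / pd) b + 1 - phi) / (phi * (ps / pd) + 2 - phi)"
proof -
  define K where "K = phi*(ps/pd-1)"
  have "ps/pd > 1" using pd by simp
  hence K0: "K > 0" using phi by (simp add: K_def)
  define xh where "xh = x_hat phi (ps/pd) b"
  have K_eq: "phi*(ps/pd-1) = K" by (simp only: K_def)
  have KK: "phi*(ps/pd-1) > 0" using K0 by (simp only: K_def)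
  have xh: "1/2 \<le> xh" "xh < 1" "g_fun xh b = K"
    unfolding xh_def K_def by (rule x_hat_props[OF b thr KK])+
  have xh_uniq: "\<And>x. 1/2 \<le> x \<Longrightarrow> x < 1 \<Longrightarrow> g_fun x b = K \<Longrightarrow> x = xh"
    unfolding xh_def K_def by (rule x_hat_props(4)[OF b thr KK])
  have inv: "\<And>t. 1/2 < X t \<and> X t < 1 \<and> 1/2 \<le> Y t \<and> Y t < 1"
  proof -
    fix t show "1/2 < X t \<and> X t < 1 \<and> 1/2 \<le> Y t \<and> Y t < 1"
    proof (induction t)
      case 0 thus ?case using X0 Y0 by simp
    next
      case (Suc t)
      have m: "1/2 \<le> mmf ps pd (Y t)" "mmf ps pd (Y t) < 1" using mmf_range[OF pd] Suc by auto
      have x: "1/2 < X (Suc t)" "X (Suc t) < 1" using Fx_range[OF b(1) _ _ m] Suc recX by auto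
      have "1/2 < Y (Suc t)" "Y (Suc t) < 1" using conv_comb[OF phi x m] recY by auto
      thus ?case using x by simp
    qed
  qed
  have mr: "\<And>t. 1/2 \<le> mmf ps pd (Y t) \<and> mmf ps pd (Y t) < 1" using mmf_range[OF pd] inv by auto
  have Y1: "1/2 < Y (Suc 0)" using conv_comb[OF phi, of "X (Suc 0)" "mmf ps pd (Y 0)"] inv mr recY by auto
  define a where "a t = X (Suc t) - X t" for t
  define c where "c t = Y (Suc t) - Y t" for t
  define k where "k = (ps-pd)/(ps+pd)"
  have k0: "k > 0" using pd by (simp add: k_def)
  have crec: "\<And>t. c (Suc t) = phi * a (Suc t) + (1-phi) * (k * c t)"
  proof -
    fix t
    have "c (Suc t) = phi * a (Suc t) + (1-phi) * (mmf ps pd (Y (Suc t)) - mmf ps pd (Y t))"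
    proof -
      have gen: "\<And>A B C D E F::real. A = phi*C + (1-phi)*E \<Longrightarrow> B = phi*D + (1-phi)*F \<Longrightarrow> A - B = phi*(C - D) + (1-phi)*(E - F)"
        by (simp add: algebra_simps)
      show ?thesis unfolding c_def a_def by (rule gen[OF recY[of "Suc t"] recY[of t]])
    qed
    thus "c (Suc t) = phi * a (Suc t) + (1-phi) * (k * c t)"
      using mmf_diff[OF pd, of "Y (Suc t)" "Y t"] by (simp add: k_def c_def)
  qed
  have Fm: "\<And>t1 t2. X t1 \<le> X t2 \<Longrightarrow> Y t1 \<le> Y t2 \<Longrightarrow> X (Suc t1) \<le> X (Suc t2)"
  proof -
    fix t1 t2 assume h: "X t1 \<le> X t2" "Y t1 \<le> Y t2"
    have "Fx b (X t1) (mmf ps pd (Y t1)) \<le> Fx b (X t2) (mmf ps pd (Y t2))"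
      using inv[of t1] inv[of t2] mr[of t1] mr[of t2] h mmf_mono[OF pd h(2)]
      by (intro Fx_mono[OF b(1)]) auto
    thus "X (Suc t1) \<le> X (Suc t2)" using recX by simp
  qed
  have P1: "\<And>t. a t \<ge> 0 \<Longrightarrow> c t \<ge> 0 \<Longrightarrow> a (Suc t) \<ge> 0"
    using Fm unfolding a_def c_def by simp
  have P1': "\<And>t. a t \<le> 0 \<Longrightarrow> c t \<le> 0 \<Longrightarrow> a (Suc t) \<le> 0"
    using Fm unfolding a_def c_def by simp
  have P2: "\<And>t. c t \<ge> 0 \<Longrightarrow> a (Suc t) \<ge> 0 \<Longrightarrow> c (Suc t) \<ge> 0"
    using crec phi k0 by (simp add: add_nonneg_nonneg)
  have P2': "\<And>t. c t \<le> 0 \<Longrightarrow> a (Suc t) \<le> 0 \<Longrightarrow> c (Suc t) \<le> 0"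
  proof -
    fix t assume h: "c t \<le> 0" "a (Suc t) \<le> 0"
    have "phi * a (Suc t) \<le> 0" using h phi by (simp add: mult_nonneg_nonpos)
    moreover have "(1-phi) * (k * c t) \<le> 0" using h phi k0 by (simp add: mult_nonneg_nonpos)
    ultimately show "c (Suc t) \<le> 0" using crec by simp
  qed
  obtain T0 where T0: "(\<forall>t\<ge>T0. a t \<ge> 0) \<or> (\<forall>t\<ge>T0. a t \<le> 0)" "(\<forall>t\<ge>T0. c t \<ge> 0) \<or> (\<forall>t\<ge>T0. c t \<le> 0)"
    using sign_pattern[of a c, OF P1 P1' P2 P2'] by blast
  have Xmono: "(\<forall>t\<ge>T0. X t \<le> X (Suc t)) \<or> (\<forall>t\<ge>T0. X (Suc t) \<le> X t)"
    using T0(1) by (auto simp: a_def)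
  have Ymono: "(\<forall>t\<ge>T0. Y t \<le> Y (Suc t)) \<or> (\<forall>t\<ge>T0. Y (Suc t) \<le> Y t)"
    using T0(2) by (auto simp: c_def)
  obtain Xs where Xs: "X \<longlonglongrightarrow> Xs"
  proof -
    have u: "\<forall>t. X t \<le> 1" using inv less_imp_le by blast
    have l: "\<forall>t. 0 \<le> X t"
    proof
      fix t show "0 \<le> X t" using inv[of t] by simp
    qed
    note u l
    thus ?thesis using Xmono ev_inc_conv[of T0 X 1] ev_dec_conv[of T0 X 0] that by blast
  qed
  obtain Ys where Ys: "Y \<longlonglongrightarrow> Ys"
  proof -
    have u: "\<forall>t. Y t \<le> 1" using inv less_imp_le by blast
    have l: "\<forall>t. 0 \<le> Y t"
    proof
      fix t show "0 \<le> Y t" using inv[of t] by simp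
    qed
    note u l
    thus ?thesis using Ymono ev_inc_conv[of T0 Y 1] ev_dec_conv[of T0 Y 0] that by blast
  qed
  define T' where "T' = max T0 (Suc T)"
  have T'gt: "T' > T" by (simp add: T'_def)
  have monoX: "monotone_on {T'..} (\<le>) (\<le>) X \<or> monotone_on {T'..} (\<le>) (\<ge>) X"
    using Xmono mono_on_from[of T0 X T'] anti_on_from[of T0 X T'] by (auto simp: T'_def)
  have monoY: "monotone_on {T'..} (\<le>) (\<le>) Y \<or> monotone_on {T'..} (\<le>) (\<ge>) Y"
    using Ymono mono_on_from[of T0 Y T'] anti_on_from[of T0 Y T'] by (auto simp: T'_def)
  have Xs_lo: "1/2 \<le> Xs" using Xs inv by (intro LIMSEQ_le_const[OF Xs]) (auto intro: less_imp_le)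
  have Xs_hi: "Xs \<le> xh" using hyp by (intro LIMSEQ_le_const2[OF Xs]) (auto simp: xh_def intro: less_imp_le)
  have Ys_lo: "1/2 \<le> Ys" using inv by (intro LIMSEQ_le_const[OF Ys]) auto
  have Ys_hi: "Ys \<le> 1" using inv by (intro LIMSEQ_le_const2[OF Ys]) (auto intro: less_imp_le)
  have mYs: "1/2 \<le> mmf ps pd Ys" "mmf ps pd Ys < 1"
  proof -
    have "mmf ps pd (1/2) \<le> mmf ps pd Ys" by (rule mmf_mono[OF pd Ys_lo])
    moreover have "mmf ps pd (1/2) = 1/2" using pd by (simp add: mmf_def field_simps)
    ultimately show "1/2 \<le> mmf ps pd Ys" by simp
    have "mmf ps pd Ys \<le> mmf ps pd 1" by (rule mmf_mono[OF pd Ys_hi])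
    moreover have "mmf ps pd 1 < 1" using pd by (simp add: mmf_def)
    ultimately show "mmf ps pd Ys < 1" by simp
  qed
  have mlim: "(\<lambda>t. mmf ps pd (Y t)) \<longlonglongrightarrow> mmf ps pd Ys"
    unfolding mmf_def using pd by (intro tendsto_intros Ys) auto
  have fpX: "Xs = Fx b Xs (mmf ps pd Ys)"
  proof -
    have "(\<lambda>t. X (Suc t)) \<longlonglongrightarrow> Xs" by (rule LIMSEQ_Suc[OF Xs])
    moreover have "(\<lambda>t. Fx b (X t) (mmf ps pd (Y t))) \<longlonglongrightarrow> Fx b Xs (mmf ps pd Ys)"
    proof -
      have den: "Xs powr b * mmf ps pd Ys + (1 - Xs) powr b * (1 - mmf ps pd Ys) \<noteq> 0"
        using Xs_lo Xs_hi xh mYs by (intro add_pos_pos[THEN less_imp_neq, THEN not_sym]) auto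
      show ?thesis unfolding Fx_def
        using Xs_lo Xs_hi xh den by (intro tendsto_intros Xs mlim) auto
    qed
    moreover have "(\<lambda>t. X (Suc t)) = (\<lambda>t. Fx b (X t) (mmf ps pd (Y t)))" using recX by (rule ext)
    ultimately show ?thesis using LIMSEQ_unique by auto
  qed
  have fpY: "Ys = phi * Xs + (1-phi) * mmf ps pd Ys"
  proof -
    have "(\<lambda>t. Y (Suc t)) \<longlonglongrightarrow> Ys" by (rule LIMSEQ_Suc[OF Ys])
    moreover have "(\<lambda>t. phi * X (Suc t) + (1-phi) * mmf ps pd (Y t)) \<longlonglongrightarrow> phi * Xs + (1-phi) * mmf ps pd Ys"
      by (intro tendsto_intros LIMSEQ_Suc[OF Xs] mlim)
    moreover have "(\<lambda>t. Y (Suc t)) = (\<lambda>t. phi * X (Suc t) + (1-phi) * mmf ps pd (Y t))" using recY by (rule ext)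
    ultimately show ?thesis using LIMSEQ_unique by auto
  qed
  have Xs_eq: "Xs = xh"
  proof (cases "Xs = 1/2")
    case False
    hence Xs_gt: "1/2 < Xs" using Xs_lo by simp
    have Xs_lt: "Xs < 1" using Xs_hi xh by simp
    define m where "m = mmf ps pd Ys"
    have m_eq: "m = Xs powr (1-b) / (Xs powr (1-b) + (1-Xs) powr (1-b))"
      using fp_m[OF b, of Xs m] Xs_gt Xs_lt mYs fpX by (simp add: m_def)
    have "0 = pd/(ps-pd) * (K*(Xs - m) - (2*m - 1))"
      using y_gap[OF pd, of phi Xs Ys] fpY unfolding K_eq by (simp add: m_def)
    hence "K*(Xs - m) - (2*m - 1) = 0" using pd by simp
    hence "(Xs * (1-Xs) powr (1-b) - (1-Xs) * Xs powr (1-b)) / (Xs powr (1-b) + (1-Xs) powr (1-b)) * (K - g_fun Xs b) = 0"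
      using gap_g(1)[OF b Xs_gt Xs_lt, of K] m_eq by simp
    moreover have "\<And>A Kx gx::real. 0 < A \<Longrightarrow> A * (Kx - gx) = 0 \<Longrightarrow> Kx = gx" by simp
    ultimately have "K = g_fun Xs b" using gap_g(2)[OF b Xs_gt Xs_lt] by blast
    thus ?thesis using xh_uniq[of Xs] Xs_gt Xs_lt by simp
  next
    case True
    have xh_gt: "1/2 < xh" using hyp inv[of T] by (auto simp: xh_def)
    define M where "M z = z powr (1-b) / (z powr (1-b) + (1-z) powr (1-b))" for z :: real
    define eta where "eta z = ((ps+pd)*M z - pd)/(ps-pd)" for z
    have eta_half: "eta (1/2) = 1/2"
    proof -
      have "M (1/2) = 1/2" by (simp add: M_def)
      thus ?thesis using pd by (simp add: eta_def field_simps)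
    qed
    have eta_eq: "eta = (\<lambda>z. ((ps+pd)*(z powr (1-b) / (z powr (1-b) + (1-z) powr (1-b))) - pd)/(ps-pd))"
      by (rule ext) (simp add: eta_def M_def)
    have "(eta \<longlongrightarrow> eta (1/2)) (at_right (1/2))"
      unfolding eta_eq using pd by (intro tendsto_intros) auto
    hence "eventually (\<lambda>z. eta z < Y (Suc 0)) (at_right (1/2))"
      using Y1 eta_half by (intro order_tendstoD(2)) auto
    then obtain b1 where b1: "b1 > 1/2" "\<And>z. z > 1/2 \<Longrightarrow> z < b1 \<Longrightarrow> eta z < Y (Suc 0)"
      unfolding eventually_at_right_field by blast
    define xi where "xi = (1/2 + min b1 (min (X (Suc 0)) xh))/2"
    have X1: "1/2 < X (Suc 0)" using inv by simp
    have xi: "1/2 < xi" "xi < b1" "xi < X (Suc 0)" "xi < xh"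
      using b1(1) X1 xh_gt by (auto simp: xi_def min_def)
    have xi1: "xi < 1" using xi xh by simp
    have eta1: "eta xi < Y (Suc 0)" using b1(2) xi by simp
    have gxi: "g_fun xi b < K" using g_fun_mono[OF b xi(1) xi(4) xh(2)] xh by simp
    have mM: "mmf ps pd (eta xi) = M xi" unfolding eta_def by (rule mmf_inv[OF pd])
    have FxM: "Fx b xi (M xi) = xi" unfolding M_def using xi xi1 by (intro Fx_fix[OF b]) auto
    have M01: "0 < M xi" "M xi < 1"
    proof -
      have "0 < xi powr (1-b)" "0 < (1-xi) powr (1-b)" using xi xi1 by auto
      hence p: "0 < xi powr (1-b)" "0 < (1-xi) powr (1-b)" .
      show "0 < M xi" unfolding M_def by (rule divide_pos_pos[OF p(1) add_pos_pos[OF p]])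
      show "M xi < 1" unfolding M_def using add_pos_pos[OF p] p(2) by (subst divide_less_eq_1_pos) auto
    qed
    have supY: "eta xi \<le> phi * xi + (1-phi) * M xi"
    proof -
      have "phi*xi + (1-phi)*mmf ps pd (eta xi) - eta xi = pd/(ps-pd) * (K*(xi - M xi) - (2*M xi - 1))"
        using y_gap[OF pd, of phi xi "eta xi"] mM unfolding K_eq by simp
      also have "K*(xi - M xi) - (2*M xi - 1) = (xi * (1-xi) powr (1-b) - (1-xi) * xi powr (1-b)) / (xi powr (1-b) + (1-xi) powr (1-b)) * (K - g_fun xi b)"
        using gap_g(1)[OF b xi(1) xi1, of K] by (simp add: M_def)
      finally have "phi*xi + (1-phi)*mmf ps pd (eta xi) - eta xi = pd/(ps-pd) * ((xi * (1-xi) powr (1-b) - (1-xi) * xi powr (1-b)) / (xi powr (1-b) + (1-xi) powr (1-b)) * (K - g_fun xi b))" .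
      moreover have "0 \<le> pd/(ps-pd) * ((xi * (1-xi) powr (1-b) - (1-xi) * xi powr (1-b)) / (xi powr (1-b) + (1-xi) powr (1-b)) * (K - g_fun xi b))"
        using gap_g(2)[OF b xi(1) xi1] gxi pd by (intro mult_nonneg_nonneg) auto
      ultimately show ?thesis using mM by simp
    qed
    have sp: "\<And>t. xi \<le> X (Suc t) \<and> eta xi \<le> Y (Suc t)"
    proof -
      fix t show "xi \<le> X (Suc t) \<and> eta xi \<le> Y (Suc t)"
      proof (induction t)
        case 0 thus ?case using xi eta1 by simp
      next
        case (Suc t)
        have mle: "M xi \<le> mmf ps pd (Y (Suc t))" using mmf_mono[OF pd, of "eta xi" "Y (Suc t)"] Suc mM by simp
        have "Fx b xi (M xi) \<le> Fx b (X (Suc t)) (mmf ps pd (Y (Suc t)))"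
          using xi Suc inv[of "Suc t"] M01 mle mr[of "Suc t"] by (intro Fx_mono[OF b(1)]) auto
        hence xs: "xi \<le> X (Suc (Suc t))" using FxM recX[of "Suc t"] by simp
        have "phi * xi + (1-phi) * M xi \<le> phi * X (Suc (Suc t)) + (1-phi) * mmf ps pd (Y (Suc t))"
          using xs mle phi by (intro add_mono mult_left_mono) auto
        hence "eta xi \<le> Y (Suc (Suc t))" using supY recY[of "Suc t"] by simp
        thus ?case using xs by simp
      qed
    qed
    have "xi \<le> Xs"
    proof (rule LIMSEQ_le_const[OF Xs], intro exI[of _ 1] allI impI)
      fix n :: nat assume "1 \<le> n"
      then obtain k where "n = Suc k" by (cases n) auto
      thus "xi \<le> X n" using sp by simp
    qed
    thus ?thesis using True xi by simp
  qed
  have Ys_eq: "Ys = (phi * (ps / pd + 1) * xh + 1 - phi) / (phi * (ps / pd) + 2 - phi)"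
    using ys_formula[OF pd phi fpY] Xs_eq by simp
  show ?thesis
    using T'gt monoX monoY Xs Ys Xs_eq Ys_eq by (auto simp: xh_def)
qed


lemma sum_split_nbrs:
  fixes E :: "'a \<Rightarrow> 'a \<Rightarrow> bool" and f :: "'a \<Rightarrow> real"
  assumes fin: "finite V1" "finite V2" and disj: "V1 \<inter> V2 = {}"
    and c1: "real (card {k\<in>V1. E j k}) = \<alpha>" and c2: "real (card {k\<in>V2. E j k}) = \<beta>"
    and f1: "\<forall>k\<in>V1. f k = u" and f2: "\<forall>k\<in>V2. f k = 1 - u"
  shows "(\<Sum>k\<in>nbrs E (V1 \<union> V2) j. f k) = \<alpha>*u + \<beta>*(1-u)"
    and "real (card (nbrs E (V1 \<union> V2) j)) = \<alpha> + \<beta>"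
proof -
  have N: "nbrs E (V1 \<union> V2) j = {k\<in>V1. E j k} \<union> {k\<in>V2. E j k}" by (auto simp: nbrs_def)
  have fin1: "finite {k\<in>V1. E j k}" "finite {k\<in>V2. E j k}" using fin by auto
  have dj: "{k\<in>V1. E j k} \<inter> {k\<in>V2. E j k} = {}" using disj by auto
  have "(\<Sum>k\<in>nbrs E (V1 \<union> V2) j. f k) = (\<Sum>k\<in>{k\<in>V1. E j k}. f k) + (\<Sum>k\<in>{k\<in>V2. E j k}. f k)"
    unfolding N by (rule sum.union_disjoint[OF fin1 dj])
  also have "(\<Sum>k\<in>{k\<in>V1. E j k}. f k) = (\<Sum>k\<in>{k\<in>V1. E j k}. u)" using f1 by (intro sum.cong) auto
  also have "(\<Sum>k\<in>{k\<in>V2. E j k}. f k) = (\<Sum>k\<in>{k\<in>V2. E j k}. 1 - u)" using f2 by (intro sum.cong) auto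
  finally show "(\<Sum>k\<in>nbrs E (V1 \<union> V2) j. f k) = \<alpha>*u + \<beta>*(1-u)" using c1 c2 by simp
  have "card (nbrs E (V1 \<union> V2) j) = card {k\<in>V1. E j k} + card {k\<in>V2. E j k}"
    unfolding N by (rule card_Un_disjoint[OF fin1 dj])
  thus "real (card (nbrs E (V1 \<union> V2) j)) = \<alpha> + \<beta>" using c1 c2 by simp
qed

lemma upd_eq:
  fixes n ps pd X Y b :: real
  assumes n: "n > 0" and pd: "0 < pd" "pd < ps" and X: "0 < X" "X < 1" and Y: "1/2 \<le> Y" "Y < 1"
  defines "s \<equiv> n*ps*Y + n*pd*(1-Y)" and "d \<equiv> n*ps + n*pd"
  shows "X powr b * s / (X powr b * s + (1-X) powr b * (d - s)) = Fx b X (mmf ps pd Y)"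
    and "(1-X) powr b * (d - s) / ((1-X) powr b * (d - s) + (1-(1-X)) powr b * (d - (d - s))) = 1 - Fx b X (mmf ps pd Y)"
    and "s / d = mmf ps pd Y"
    and "(d - s) / d = 1 - mmf ps pd Y"
proof -
  define m where "m = mmf ps pd Y"
  have m: "1/2 \<le> m" "m < 1" using mmf_range[OF pd Y] by (auto simp: m_def)
  have d0: "d > 0" using n pd unfolding d_def by (intro add_pos_pos mult_pos_pos) auto
  have pp: "ps + pd \<noteq> 0" using pd by simp
  have "d * m = n * ((ps+pd) * ((ps*Y + pd*(1-Y))/(ps+pd)))" by (simp add: d_def m_def mmf_def distrib_left distrib_right)
  also have "\<dots> = n * (ps*Y + pd*(1-Y))" using pp by simp
  finally have sm: "s = d * m" by (simp add: s_def algebra_simps)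
  have dsm: "d - s = d * (1 - m)" by (simp add: sm algebra_simps)
  show "s / d = mmf ps pd Y" using d0 by (simp add: sm m_def)
  show "(d - s) / d = 1 - mmf ps pd Y" using d0 by (simp add: dsm m_def)
  have den: "X powr b * m + (1-X) powr b * (1-m) > 0" using X m by (intro add_pos_pos) auto
  have "X powr b * s / (X powr b * s + (1-X) powr b * (d - s)) = (d * (X powr b * m)) / (d * (X powr b * m + (1-X) powr b * (1-m)))"
    unfolding sm dsm by (simp add: algebra_simps)
  also have "\<dots> = Fx b X m" using d0 by (simp add: Fx_def)
  finally show "X powr b * s / (X powr b * s + (1-X) powr b * (d - s)) = Fx b X (mmf ps pd Y)" by (simp add: m_def)
  have "(1-X) powr b * (d - s) / ((1-X) powr b * (d - s) + (1-(1-X)) powr b * (d - (d - s))) = (d * ((1-X) powr b * (1-m))) / (d * (X powr b * m + (1-X) powr b * (1-m)))"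
    unfolding dsm by (simp add: sm algebra_simps)
  also have "\<dots> = ((1-X) powr b * (1-m)) / (X powr b * m + (1-X) powr b * (1-m))" using d0 by simp
  also have "\<dots> = 1 - Fx b X m" using den by (simp add: Fx_def field_simps)
  finally show "(1-X) powr b * (d - s) / ((1-X) powr b * (d - s) + (1-(1-X)) powr b * (d - (d - s))) = 1 - Fx b X (mmf ps pd Y)"
    by (simp add: m_def)
qed

theorem lemmaB6:
  fixes E :: "'a \<Rightarrow> 'a \<Rightarrow> bool" and V1 V2 :: "'a set" and n :: nat
    and ps pd phi b x0 y0 :: real
    and x y :: "nat \<Rightarrow> 'a \<Rightarrow> real" and i :: 'a and T :: nat
  assumes G: "two_island E V1 V2 n ps pd"
    and phi: "0 < phi" "phi < 1"
    and b: "2 / (phi * (ps / pd - 1) + 2) \<le> b" "b < 1"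
    and dyn: "dual_dynamics E (V1 \<union> V2) phi b x y"
    and x0: "1/2 < x0" "x0 < 1"
    and y0: "1/2 \<le> y0" "y0 \<le> x0"
    and init1: "\<forall>j\<in>V1. x 0 j = x0 \<and> y 0 j = y0"
    and init2: "\<forall>j\<in>V2. x 0 j = 1 - x0 \<and> y 0 j = 1 - y0"
    and i: "i \<in> V1"
    and T: "T > 0" "\<forall>t\<ge>T. x t i < x_hat phi (ps / pd) b"
  shows "\<exists>T'>T.
           (monotone_on {T'..} (\<le>) (\<le>) (\<lambda>t. x t i) \<or> monotone_on {T'..} (\<le>) (\<ge>) (\<lambda>t. x t i)) \<and>
           (monotone_on {T'..} (\<le>) (\<le>) (\<lambda>t. y t i) \<or> monotone_on {T'..} (\<le>) (\<ge>) (\<lambda>t. y t i)) \<and>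
           (\<lambda>t. x t i) \<longlonglongrightarrow> x_hat phi (ps / pd) b \<and>
           (\<lambda>t. y t i) \<longlonglongrightarrow>
              (phi * (ps / pd + 1) * x_hat phi (ps / pd) b + 1 - phi) / (phi * (ps / pd) + 2 - phi)"
proof -
  have n1: "n \<ge> 1" and pd: "0 < pd" "pd < ps" and fin: "finite V1" "finite V2"
    and disj: "V1 \<inter> V2 = {}"
    and deg1: "\<forall>j\<in>V1. real (card {k\<in>V1. E j k}) = real n * ps \<and> real (card {k\<in>V2. E j k}) = real n * pd"
    and deg2: "\<forall>j\<in>V2. real (card {k\<in>V2. E j k}) = real n * ps \<and> real (card {k\<in>V1. E j k}) = real n * pd"
    using G unfolding two_island_def by auto
  have nr: "real n > 0" using n1 by simp
  have b0: "0 < b"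
  proof -
    have "phi * (ps/pd - 1) > 0" using phi pd by simp
    hence "2 / (phi * (ps / pd - 1) + 2) > 0" by simp
    thus ?thesis using b(1) by linarith
  qed
  define V where "V = V1 \<union> V2"
  have dynj: "\<And>t j. j \<in> V \<Longrightarrow>
      x (Suc t) j = x t j powr b * (\<Sum>k\<in>nbrs E V j. y t k) /
          (x t j powr b * (\<Sum>k\<in>nbrs E V j. y t k) + (1 - x t j) powr b * (real (card (nbrs E V j)) - (\<Sum>k\<in>nbrs E V j. y t k)))
      \<and> y (Suc t) j = phi * x (Suc t) j + (1 - phi) * (\<Sum>k\<in>nbrs E V j. y t k / real (card (nbrs E V j)))"
    using dyn unfolding dual_dynamics_def V_def Let_def by blast
  define A where "A = real n * ps"
  define B where "B = real n * pd"
  define IH where "IH t \<longleftrightarrow> (\<forall>j\<in>V1. x t j = x t i \<and> y t j = y t i) \<and> (\<forall>j\<in>V2. x t j = 1 - x t i \<and> y t j = 1 - y t i)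
      \<and> 1/2 < x t i \<and> x t i < 1 \<and> 1/2 \<le> y t i \<and> y t i < 1" for t
  have step: "\<And>t. IH t \<Longrightarrow>
     (\<forall>j\<in>V1. x (Suc t) j = Fx b (x t i) (mmf ps pd (y t i)) \<and> y (Suc t) j = phi * Fx b (x t i) (mmf ps pd (y t i)) + (1-phi) * mmf ps pd (y t i))
   \<and> (\<forall>j\<in>V2. x (Suc t) j = 1 - Fx b (x t i) (mmf ps pd (y t i)) \<and> y (Suc t) j = 1 - (phi * Fx b (x t i) (mmf ps pd (y t i)) + (1-phi) * mmf ps pd (y t i)))"
  proof -
    fix t assume ih: "IH t"
    define X where "X = x t i"
    define Y where "Y = y t i"
    have XY: "0 < X" "X < 1" "1/2 \<le> Y" "Y < 1" using ih by (auto simp: IH_def X_def Y_def)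
    note U = upd_eq[OF nr pd XY]
    have yV1: "\<forall>k\<in>V1. y t k = Y" and yV2: "\<forall>k\<in>V2. y t k = 1 - Y" using ih by (auto simp: IH_def Y_def)
    have xV1: "\<forall>k\<in>V1. x t k = X" and xV2: "\<forall>k\<in>V2. x t k = 1 - X" using ih by (auto simp: IH_def X_def)
    have ds: "A + B - (A*Y + B*(1-Y)) = B*Y + A*(1-Y)" by (simp add: algebra_simps)
    show "?thesis t"
    proof (intro conjI ballI)
      fix j assume j: "j \<in> V1"
      have S: "(\<Sum>k\<in>nbrs E V j. y t k) = A*Y + B*(1-Y)" and C: "real (card (nbrs E V j)) = A + B"
        using sum_split_nbrs[OF fin disj, of E j A B "y t" Y] deg1 j yV1 yV2 by (auto simp: V_def A_def B_def)
      have avg: "(\<Sum>k\<in>nbrs E V j. y t k / real (card (nbrs E V j))) = (A*Y + B*(1-Y)) / (A + B)"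
        unfolding sum_divide_distrib[symmetric] S C ..
      have jV: "j \<in> V" using j by (simp add: V_def)
      have xs: "x (Suc t) j = Fx b X (mmf ps pd Y)"
        using dynj[OF jV, of t] S C xV1 j U(1) by (simp add: A_def B_def algebra_simps)
      thus "x (Suc t) j = Fx b (x t i) (mmf ps pd (y t i))" by (simp add: X_def Y_def)
      have avg2: "(\<Sum>k\<in>nbrs E V j. y t k / real (card (nbrs E V j))) = mmf ps pd Y"
        unfolding avg A_def B_def by (rule U(3))
      have "y (Suc t) j = phi * x (Suc t) j + (1 - phi) * (\<Sum>k\<in>nbrs E V j. y t k / real (card (nbrs E V j)))"
        using dynj[OF jV, of t] by blast
      hence "y (Suc t) j = phi * Fx b X (mmf ps pd Y) + (1-phi) * mmf ps pd Y"
        unfolding xs avg2 .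
      thus "y (Suc t) j = phi * Fx b (x t i) (mmf ps pd (y t i)) + (1-phi) * mmf ps pd (y t i)" by (simp add: X_def Y_def)
    next
      fix j assume j: "j \<in> V2"
      have S: "(\<Sum>k\<in>nbrs E V j. y t k) = B*Y + A*(1-Y)" and C: "real (card (nbrs E V j)) = B + A"
        using sum_split_nbrs[OF fin disj, of E j B A "y t" Y] deg2 j yV1 yV2 by (auto simp: V_def A_def B_def)
      have S': "(\<Sum>k\<in>nbrs E V j. y t k) = (A + B) - (A*Y + B*(1-Y))" using S ds by simp
      have C': "real (card (nbrs E V j)) = A + B" using C by simp
      have avg: "(\<Sum>k\<in>nbrs E V j. y t k / real (card (nbrs E V j))) = ((A + B) - (A*Y + B*(1-Y))) / (A + B)"
        unfolding sum_divide_distrib[symmetric] S' C' ..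
      have jV: "j \<in> V" using j by (simp add: V_def)
      have xs: "x (Suc t) j = 1 - Fx b X (mmf ps pd Y)"
      proof -
        have "x (Suc t) j = (1-X) powr b * ((A + B) - (A*Y + B*(1-Y))) /
          ((1-X) powr b * ((A + B) - (A*Y + B*(1-Y))) + (1 - (1-X)) powr b * ((A+B) - ((A + B) - (A*Y + B*(1-Y)))))"
          using dynj[OF jV, of t] S' C' xV2 j by simp
        thus ?thesis using U(2) by (simp add: A_def B_def)
      qed
      thus "x (Suc t) j = 1 - Fx b (x t i) (mmf ps pd (y t i))" by (simp add: X_def Y_def)
      have avg2: "(\<Sum>k\<in>nbrs E V j. y t k / real (card (nbrs E V j))) = 1 - mmf ps pd Y"
        unfolding avg A_def B_def by (rule U(4))
      have "y (Suc t) j = phi * x (Suc t) j + (1 - phi) * (\<Sum>k\<in>nbrs E V j. y t k / real (card (nbrs E V j)))"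
        using dynj[OF jV, of t] by blast
      hence "y (Suc t) j = phi * (1 - Fx b X (mmf ps pd Y)) + (1-phi) * (1 - mmf ps pd Y)"
        unfolding xs avg2 .
      thus "y (Suc t) j = 1 - (phi * Fx b (x t i) (mmf ps pd (y t i)) + (1-phi) * mmf ps pd (y t i))"
        by (simp add: X_def Y_def algebra_simps)
    qed
  qed
  have IHall: "\<And>t. IH t"
  proof -
    fix t show "IH t"
    proof (induction t)
      case 0 thus ?case using init1 init2 i x0 y0 by (simp add: IH_def)
    next
      case (Suc t)
      note st = step[OF Suc]
      have XY: "1/2 < x t i" "x t i < 1" "1/2 \<le> y t i" "y t i < 1" using Suc by (auto simp: IH_def)
      have m: "1/2 \<le> mmf ps pd (y t i)" "mmf ps pd (y t i) < 1" using mmf_range[OF pd XY(3,4)] by auto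
      have F: "1/2 < Fx b (x t i) (mmf ps pd (y t i))" "Fx b (x t i) (mmf ps pd (y t i)) < 1"
        using Fx_range[OF b0 XY(1,2) m] by auto
      have Yn: "1/2 < phi * Fx b (x t i) (mmf ps pd (y t i)) + (1-phi) * mmf ps pd (y t i)"
        "phi * Fx b (x t i) (mmf ps pd (y t i)) + (1-phi) * mmf ps pd (y t i) < 1"
        using conv_comb[OF phi F m] by auto
      have xi: "x (Suc t) i = Fx b (x t i) (mmf ps pd (y t i))" and yi: "y (Suc t) i = phi * Fx b (x t i) (mmf ps pd (y t i)) + (1-phi) * mmf ps pd (y t i)"
        using st i by auto
      show ?case unfolding IH_def using st F Yn xi yi by auto
    qed
  qed
  have recX: "\<And>t. x (Suc t) i = Fx b (x t i) (mmf ps pd (y t i))" using step[OF IHall] i by auto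
  have recY: "\<And>t. y (Suc t) i = phi * x (Suc t) i + (1-phi) * mmf ps pd (y t i)" using step[OF IHall] i recX by auto
  have X0: "1/2 < x 0 i" "x 0 i < 1" and Y0: "1/2 \<le> y 0 i" "y 0 i < 1" using IHall[of 0] by (auto simp: IH_def)
  show ?thesis
    using scalar_dyn[of pd ps phi b "\<lambda>t. x t i" "\<lambda>t. y t i" T, OF pd phi b0 b(2) b(1) recX recY X0 Y0 T(2)] .
qed

end
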